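(* The set $\{A/B : A,B\in\mathtt{APAL}\}$ is dense in the positive real numbers $\mathbb{R}^{+}$.
   Context: A positive integer $n$ is antipalindromic if its binary representation $w=w_1w_2\cdots w_L$ (most significant digit first, no leading zeros) has even length $L$ and the second half is the reverse of the bitwise complement of the first half, i.e. $w_i+w_{L+1-i}=1$ for all $i$. For example $52=(110100)_2$ is antipalindromic. $\mathtt{APAL}=\{2,10,12,38,42,52,56,\dots\}$ denotes the set of antipalindromic numbers. *)

theory Defs
  imports "HOL-Analysis.Analysis"
begin

definition binlen :: "nat \<Rightarrow> nat" where
  "binlen n = (LEAST L. n < 2 ^ L)"

text \<open>Digit w_i (i = 1..L, most significant first) is bit (L - i) of n, so
  w_i + w_(L+1-i) = 1 becomes: bit j and bit (L-1-j) differ for all j < L.\<close>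
definition antipalindromic :: "nat \<Rightarrow> bool" where
  "antipalindromic n \<longleftrightarrow> n > 0 \<and> even (binlen n) \<and>
     (\<forall>j < binlen n. (n div 2 ^ j) mod 2 + (n div 2 ^ (binlen n - 1 - j)) mod 2 = 1)"

definition APAL :: "nat set" where
  "APAL = {n. antipalindromic n}"

end

theory Submission
  imports Defs
begin

lemma sum_bits_lt: "(\<forall>i<L. d i \<le> (1::nat)) \<Longrightarrow> (\<Sum>i<L. d i * 2^i) < (2::nat)^L"
proof (induction L)
  case 0 then show ?case by simp
next
  case (Suc L)
  then have "(\<Sum>i<L. d i * 2^i) < (2::nat)^L" "d L \<le> 1" by auto
  then have "(\<Sum>i<L. d i * 2^i) + d L * 2^L < 2^L + 1 * 2^L"
    by (metis add_less_le_mono mult_le_mono1)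
  then show ?case by simp
qed

lemma sum_bits_digit: "(\<forall>i<L. d i \<le> (1::nat)) \<Longrightarrow> j < L \<Longrightarrow> (\<Sum>i<L. d i * 2^i) div 2^j mod 2 = d j"
proof (induction L)
  case 0 then show ?case by simp
next
  case (Suc L)
  have lt: "(\<Sum>i<L. d i * 2^i) < (2::nat)^L" using Suc.prems sum_bits_lt[of L d] by auto
  show ?case
  proof (cases "j < L")
    case True
    obtain c where c: "d L * (2::nat)^L = 2^j * (2 * c)"
    proof
      have "(2::nat)^L = 2^j * 2^(L-j-1) * 2" using True
        by (metis Suc_diff_Suc add_Suc_right le_add_diff_inverse less_imp_le_nat power_Suc2 power_add diff_Suc_1)
      then show "d L * (2::nat)^L = 2^j * (2 * (d L * 2^(L-j-1)))" by simp
    qed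
    have "((\<Sum>i<L. d i * 2^i) + d L * 2^L) div 2^j = (\<Sum>i<L. d i * 2^i) div 2^j + 2 * c"
      unfolding c by simp
    then have "(\<Sum>i<Suc L. d i * 2^i) div 2^j mod 2 = (\<Sum>i<L. d i * 2^i) div 2^j mod 2"
      by simp
    then show ?thesis using Suc True by simp
  next
    case False
    then have j: "j = L" using Suc.prems by auto
    have "((\<Sum>i<L. d i * 2^i) + d L * 2^L) div 2^L = d L"
      using lt by (simp add: div_add1_eq)
    then show ?thesis using j Suc.prems by auto
  qed
qed

lemma bits_repr: "u < (2::nat)^k \<Longrightarrow> u = (\<Sum>j<k. (u div 2^j mod 2) * 2^j)"
proof (induction k arbitrary: u)
  case 0 then show ?case by simp
next
  case (Suc k)
  have "u div 2 < 2^k" using Suc.prems by auto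
  then have ih: "u div 2 = (\<Sum>j<k. (u div 2 div 2^j mod 2) * 2^j)" using Suc.IH by blast
  have "(\<Sum>j<Suc k. (u div 2^j mod 2) * 2^j) = u mod 2 + (\<Sum>j<k. (u div 2^(Suc j) mod 2) * 2^(Suc j))"
    by (subst sum.lessThan_Suc_shift) simp
  also have "\<dots> = u mod 2 + 2 * (\<Sum>j<k. (u div 2 div 2^j mod 2) * 2^j)"
    by (simp add: sum_distrib_left div_mult2_eq mult.assoc mult.left_commute)
  also have "\<dots> = u" using ih by simp
  finally show ?case by simp
qed

lemma binlen_eq: "2^(L-1) \<le> n \<Longrightarrow> n < (2::nat)^L \<Longrightarrow> L > 0 \<Longrightarrow> binlen n = L"
  unfolding binlen_def
proof (rule Least_equality)
  fix M assume "2^(L-1) \<le> n" "n < 2^M" "L > 0"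
  then have "(2::nat)^(L-1) < 2^M" by linarith
  then have "L - 1 < M" by simp
  then show "L \<le> M" using \<open>L > 0\<close> by linarith
qed

lemma apal_exists:
  assumes k: "k \<ge> 1" and u1: "2^(k-1) \<le> u" and u2: "u < (2::nat)^k"
  shows "\<exists>A\<in>APAL. u * 2^k \<le> A \<and> A < (u+1) * 2^k"
proof -
  define e where "e j = u div 2^j mod 2" for j
  define d where "d j = (if j \<ge> k then e (j-k) else 1 - e (k-1-j))" for j
  define r where "r = (\<Sum>j<k. d j * 2^j)"
  define N where "N = (\<Sum>j<2*k. d j * 2^j)"
  have e1: "e j \<le> 1" for j unfolding e_def by simp
  have d1: "\<forall>i<2*k. d i \<le> 1" unfolding d_def using e1 by auto
  have rlt: "r < 2^k" unfolding r_def by (rule sum_bits_lt) (use d1 in auto)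
  have "N = r + (\<Sum>j<k. d (j+k) * 2^(j+k))"
    unfolding N_def r_def using sum.atLeastLessThan_concat[of 0 k "2*k" "\<lambda>j. d j * 2^j"]
      sum.shift_bounds_nat_ivl[of "\<lambda>j. d j * 2^j" 0 k k]
    by (simp add: lessThan_atLeast0 mult_2)
  also have "(\<Sum>j<k. d (j+k) * 2^(j+k)) = 2^k * (\<Sum>j<k. e j * 2^j)"
    by (simp add: d_def sum_distrib_left power_add mult.commute mult.left_commute)
  also have "(\<Sum>j<k. e j * 2^j) = u" using bits_repr[OF u2] unfolding e_def by simp
  finally have Nr: "N = r + 2^k * u" .
  have lo: "u * 2^k \<le> N" and hi: "N < (u+1) * 2^k" using Nr rlt by simp_all
  have "2^(2*k-1) \<le> N"
  proof -
    have "(2::nat)^(2*k-1) = 2^(k-1) * 2^k" using k by (simp flip: power_add)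
    also have "\<dots> \<le> u * 2^k" using u1 by simp
    finally show ?thesis using lo by linarith
  qed
  moreover have "N < 2^(2*k)"
  proof -
    have "u+1 \<le> 2^k" using u2 by simp
    then have "(u+1) * 2^k \<le> 2^k * (2::nat)^k" by (rule mult_right_mono) simp
    then show ?thesis using hi by (simp add: power_add mult_2 flip: power_add) 
  qed
  ultimately have bl: "binlen N = 2*k" using binlen_eq k by auto
  have dig: "N div 2^j mod 2 = d j" if "j < 2*k" for j
    unfolding N_def using sum_bits_digit[OF d1 that] .
  have "antipalindromic N"
    unfolding antipalindromic_def bl
  proof (intro conjI allI impI)
    show "N > 0" using \<open>2^(2*k-1) \<le> N\<close> by (metis less_le_trans zero_less_power zero_less_numeral)
    show "even (2*k)" by simp
    fix j assume j: "j < 2*k"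
    have j2: "2*k - 1 - j < 2*k" using j by linarith
    show "N div 2 ^ j mod 2 + N div 2 ^ (2 * k - 1 - j) mod 2 = 1"
      unfolding dig[OF j] dig[OF j2] d_def using e1[of "j-k"] e1[of "k-1-j"] j
      by (auto simp: Suc_diff_Suc)
  qed
  then show ?thesis using lo hi unfolding APAL_def by auto
qed


lemma apal_approx:
  assumes k: "k \<ge> 1" and a: "1 \<le> a" "a \<le> (2::real)"
  shows "\<exists>A\<in>APAL. \<bar>real A / 2^(2*k-1) - a\<bar> \<le> 2 * inverse (2^k)"
proof -
  define M :: real where "M = 2^(k-1)"
  have M0: "M > 0" unfolding M_def by simp
  have Mk: "(2::real)^k = 2 * M" unfolding M_def using k by (simp flip: power_Suc)
  obtain u :: nat where u1: "2^(k-1) \<le> u" and u2: "u < 2^k" and ua: "real u \<le> a * M" "a * M - 1 \<le> real u"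
  proof (cases "\<lfloor>a * M\<rfloor> < 2^k")
    case True
    define u where "u = nat \<lfloor>a * M\<rfloor>"
    have aM: "M \<le> a * M" using a M0 by simp
    have "real (2^(k-1)) \<le> a*M" using aM by (simp add: M_def)
    then have "int (2^(k-1)) \<le> \<lfloor>a * M\<rfloor>" by (metis le_floor_iff of_int_of_nat_eq)
    then have "2^(k-1) \<le> u" unfolding u_def by linarith
    moreover have "u < 2^k"
    proof -
      have "0 \<le> \<lfloor>a * M\<rfloor>" using aM M0 by simp
      then show ?thesis unfolding u_def using True by (simp add: nat_less_iff)
    qed
    moreover have "real u = of_int \<lfloor>a * M\<rfloor>" unfolding u_def
      using aM M0 by simp
    moreover have "of_int \<lfloor>a * M\<rfloor> \<le> a * M" "a * M - 1 \<le> of_int \<lfloor>a * M\<rfloor>"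
      by linarith+
    ultimately show ?thesis using that by simp
  next
    case False
    define u :: nat where "u = 2^k - 1"
    have "(2::nat)^(k-1) < 2^k" using k by simp
    then have "2^(k-1) \<le> u" unfolding u_def by linarith
    moreover have "u < 2^k" unfolding u_def by simp
    moreover have "a * M \<le> 2^k" using Mk a M0 by simp
    moreover have "real u = 2^k - 1" unfolding u_def by (simp add: of_nat_diff)
    moreover have "2^k \<le> a * M"
    proof -
      have "(2::int)^k \<le> \<lfloor>a * M\<rfloor>" using False by simp
      then have "real_of_int (2^k) \<le> a * M" by (simp only: le_floor_iff)
      then show ?thesis by simp
    qed
    ultimately show ?thesis using that[of u] by linarith
  qed
  obtain A where A: "A \<in> APAL" "u * 2^k \<le> A" "A < (u+1) * 2^k" using apal_exists[OF k u1 u2] by blast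
  have e: "(2::real)^(2*k-1) = M * 2^k" unfolding M_def using k by (simp flip: power_add)
  have "real (u * 2^k) \<le> real A" using A(2) by (simp only: of_nat_le_iff)
  then have lo: "real u * 2^k \<le> real A" by simp
  have "real A \<le> real ((u + 1) * 2^k)" using A(3) by (simp only: of_nat_le_iff less_imp_le)
  then have hi: "real A \<le> (real u + 1) * 2^k" by (simp add: algebra_simps)
  have p: "(2::real)^k > 0" by simp
  have "real A / 2^(2*k-1) \<ge> real u / M" using lo p M0 unfolding e by (simp add: field_simps)
  moreover have "real A / 2^(2*k-1) \<le> (real u + 1) / M" using hi p M0 unfolding e by (simp add: field_simps)
  moreover have "real u / M \<ge> a - 1/M"
  proof -
    have "a - 1/M = (a*M - 1)/M" using M0 by (simp add: field_simps)
    then show ?thesis using divide_right_mono[OF ua(2), of M] M0 by simp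
  qed
  moreover have "(real u + 1)/M \<le> a + 1/M"
  proof -
    have "a + 1/M = (a*M + 1)/M" using M0 by (simp add: field_simps)
    then show ?thesis using divide_right_mono[of "real u + 1" "a*M+1" M] ua(1) M0 by simp
  qed
  moreover have "1/M = 2 * inverse (2^k)" using Mk M0 by (simp add: field_simps)
  ultimately have "\<bar>real A / 2^(2*k-1) - a\<bar> \<le> 2 * inverse (2^k)" unfolding abs_le_iff by linarith
  then show ?thesis using A(1) by blast
qed

lemma apal_seq:
  assumes a: "1 \<le> a" "a \<le> (2::real)"
  shows "\<exists>g. (\<forall>n. g n \<in> APAL) \<and> (\<lambda>n. real (g (n+1)) / 2^(2*(n+1)-1)) \<longlonglongrightarrow> a"
proof -
  have "\<forall>n. \<exists>A\<in>APAL. \<bar>real A / 2^(2*(n+1)-1) - a\<bar> \<le> 2 * inverse (2^(n+1))"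
  proof
    fix n show "\<exists>A\<in>APAL. \<bar>real A / 2^(2*(n+1)-1) - a\<bar> \<le> 2 * inverse (2^(n+1))"
      by (rule apal_approx) (use a in auto)
  qed
  then obtain g where g: "\<And>n. g n \<in> APAL" "\<And>n. \<bar>real (g n) / 2^(2*(n+1)-1) - a\<bar> \<le> 2 * inverse (2^(n+1))"
    by metis
  define h where "h n = g (n - 1)" for n
  have "(\<lambda>n. 2 * inverse ((2::real)^(n+1))) \<longlonglongrightarrow> 0"
    using tendsto_mult_right_zero[OF LIMSEQ_ignore_initial_segment[OF LIMSEQ_inverse_realpow_zero[of "2::real"], of 1], of 2]
    by simp
  then have "(\<lambda>n. real (g n) / 2^(2*(n+1)-1) - a) \<longlonglongrightarrow> 0"
    by (rule Lim_null_comparison[rotated]) (use g(2) in auto)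
  then have "(\<lambda>n. real (g n) / 2^(2*(n+1)-1)) \<longlonglongrightarrow> a" by (rule LIM_zero_cancel)
  then show ?thesis using g(1) unfolding h_def by (intro exI[of _ h]) (auto simp: h_def)
qed


lemma decomp:
  assumes x: "x > (0::real)"
  shows "\<exists>a b P q. 1 \<le> a \<and> a \<le> 2 \<and> 1 \<le> b \<and> b \<le> 2 \<and> x = a / b * (4^P / 4^q)"
proof -
  obtain q :: nat where q: "1/x < 4^q" using real_arch_pow[of 4 "1/x"] by auto
  define z where "z = x * 4^q"
  have z1: "1 \<le> z" using q x unfolding z_def by (simp add: field_simps)
  obtain N :: nat where "z < 4^N" using real_arch_pow[of 4 z] by auto
  define m where "m = (LEAST n. z < 4^n)"
  have zm: "z < 4^m" unfolding m_def by (rule LeastI) fact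
  have m0: "m > 0" using zm z1 by (cases m) auto
  define p where "p = m - 1"
  have pm: "m = Suc p" using m0 unfolding p_def by simp
  have zp: "4^p \<le> z" using not_less_Least[of p "\<lambda>n. z < 4^n"] pm unfolding m_def by linarith
  have zp1: "z < 4 * 4^p" using zm pm by simp
  define y where "y = z / 4^p"
  have y1: "1 \<le> y" "y < 4" using zp zp1 unfolding y_def by (simp_all add: field_simps)
  have zy: "z = y * 4^p" unfolding y_def by simp
  have xz: "x = z / 4^q" unfolding z_def by simp
  show ?thesis
  proof (cases "y \<le> 2")
    case True
    then show ?thesis using y1 xz zy by (intro exI[of _ y] exI[of _ 1] exI[of _ p] exI[of _ q]) simp
  next
    case False
    have "1 \<le> 4/y" "4/y \<le> 2" using False y1 by (simp_all add: field_simps)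
    moreover have "x = 1 / (4/y) * (4^Suc p / 4^q)" using xz zy y1 by (simp add: field_simps)
    ultimately show ?thesis by (intro exI[of _ 1] exI[of _ "4/y"] exI[of _ "Suc p"] exI[of _ q]) simp
  qed
qed

theorem theorem12:
  shows "{x::real. x > 0} \<subseteq> closure {real A / real B | A B. A \<in> APAL \<and> B \<in> APAL}"
proof
  fix x :: real assume "x \<in> {x. x > 0}"
  then have x: "x > 0" by simp
  obtain a b P q where ab: "1 \<le> a" "a \<le> 2" "1 \<le> b" "b \<le> 2" and xe: "x = a / b * (4^P / 4^q)"
    using decomp[OF x] by blast
  obtain g where g: "\<And>n. g n \<in> APAL" "(\<lambda>n. real (g (n+1)) / 2^(2*(n+1)-1)) \<longlonglongrightarrow> a"
    using apal_seq[OF ab(1,2)] by blast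
  obtain h where h: "\<And>n. h n \<in> APAL" "(\<lambda>n. real (h (n+1)) / 2^(2*(n+1)-1)) \<longlonglongrightarrow> b"
    using apal_seq[OF ab(3,4)] by blast
  have G: "(\<lambda>n. real (g (n+P+1)) / 2^(2*(n+P+1)-1)) \<longlonglongrightarrow> a"
    using LIMSEQ_ignore_initial_segment[OF g(2), of P] by simp
  have H: "(\<lambda>n. real (h (n+q+1)) / 2^(2*(n+q+1)-1)) \<longlonglongrightarrow> b"
    using LIMSEQ_ignore_initial_segment[OF h(2), of q] by simp
  have T: "(\<lambda>n. real (g (n+P+1)) / 2^(2*(n+P+1)-1) / (real (h (n+q+1)) / 2^(2*(n+q+1)-1)) * (4^P / 4^q))
      \<longlonglongrightarrow> a / b * (4^P / 4^q)"
    using ab by (intro tendsto_intros G H) auto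
  have pw: "(2::real)^(2*(n+c+1)-1) = 2^(2*n+1) * 4^c" for n c :: nat
  proof -
    have "2*(n+c+1)-1 = (2*n+1) + 2*c" by simp
    then show ?thesis by (simp add: power_add power_mult)
  qed
  have eq: "real (g (n+P+1)) / 2^(2*(n+P+1)-1) / (real (h (n+q+1)) / 2^(2*(n+q+1)-1)) * (4^P / 4^q)
      = real (g (n+P+1)) / real (h (n+q+1))" for n
    unfolding pw by (simp add: field_simps)
  have "x \<in> closure {real A / real B | A B. A \<in> APAL \<and> B \<in> APAL}"
    unfolding closure_sequential
  proof (rule exI[of _ "\<lambda>n. real (g (n+P+1)) / real (h (n+q+1))"], intro conjI allI)
    fix n show "real (g (n+P+1)) / real (h (n+q+1)) \<in> {real A / real B | A B. A \<in> APAL \<and> B \<in> APAL}"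
      using g(1) h(1) by blast
  next
    show "(\<lambda>n. real (g (n+P+1)) / real (h (n+q+1))) \<longlonglongrightarrow> x" using T unfolding eq xe .
  qed
  then show "x \<in> closure {real A / real B | A B. A \<in> APAL \<and> B \<in> APAL}" .
qed

end
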